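(* Let $x,y\in\mathbb{B}^2\setminus\{0\}$ be such that $0,x,y$ are noncollinear and $|x|\ne|y|$. Let $S^1(a,r_a)$ be the circle through $x,y,x^*,y^*$ (it is orthogonal to $S^1$), let $\{x_*,y_*\}=S^1\cap S^1(a,r_a)$ labelled so that $x_*,x,y,y_*$ occur in this order on the arc of $S^1(a,r_a)$ inside $\overline{\mathbb{B}^2}$, and let $\sigma$ be the arc of $S^1(a,r_a)$ with endpoints $x^*,y^*$ containing $x,y$. Let $S^1(c,r_c)$ be the circle through $0,x,y$, let $z$ be the point of $L(0,c)\cap S^1(a,r_a)$ in $\mathbb{B}^2$ and $z'$ the point of $L(0,c)\cap S^1(a,r_a)$ in $\mathbb{R}^2\setminus\mathbb{B}^2$. Let $b=L(x_*,y)\cap L(x,y^* )$, $d=L(x^*,y)\cap L(x_*,y^* )$, $b'=L(x,y_* )\cap L(x^*,y)$, $d'=L(x,y^* )\cap L(x^*,y_* )$. Then: (1) if $\sigma$ is a semicircle, then $z$ is the hyperbolic midpoint of the hyperbolic segment $J[x,y]$, the circle $S^1(c,r_c)$ is orthogonal to $S^1(a,r_a)$, and $|z,x,x^*,z'|=|z,y,y^*,z'|$; (2) the points $0,b,d$ are collinear, and the points $0,b',d'$ are collinear.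
   Context: $\mathbb{B}^2$ is the unit disk, $S^1$ the unit circle, $S^1(c,r)$ the circle with centre $c$ and radius $r$, $L(p,q)$ the line through $p,q$; $x^*=x/|x|^2$. For distinct points $p,q,r,s\in\mathbb{R}^2$ the absolute ratio is $|p,q,r,s|=\frac{|p-r||q-s|}{|p-q||r-s|}$. The hyperbolic distance on $\mathbb{B}^2$ satisfies $\sinh\frac{\rho(x,y)}{2}=\frac{|x-y|}{\sqrt{1-|x|^2}\sqrt{1-|y|^2}}$; $J[x,y]$ is the arc of $S^1(a,r_a)$ between $x$ and $y$, and its hyperbolic midpoint is the $z\in J[x,y]$ with $\rho(x,z)=\rho(z,y)$. *)

theory Defs
  imports "HOL-Analysis.Analysis"
begin

definition inv_pt :: "complex \<Rightarrow> complex" where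
  "inv_pt x = x / complex_of_real ((cmod x)\<^sup>2)"

definition cross :: "complex \<Rightarrow> complex \<Rightarrow> real" where
  "cross p q = Im (cnj p * q)"

definition abs_ratio :: "complex \<Rightarrow> complex \<Rightarrow> complex \<Rightarrow> complex \<Rightarrow> real" where
  "abs_ratio p q r s = (cmod (p - r) * cmod (q - s)) / (cmod (p - q) * cmod (r - s))"

definition hdist :: "complex \<Rightarrow> complex \<Rightarrow> real" where
  "hdist x y = 2 * arsinh (cmod (x - y) / (sqrt (1 - (cmod x)\<^sup>2) * sqrt (1 - (cmod y)\<^sup>2)))"

text \<open>J[x,y]: the arc of the circle sphere a r between x and y that lies in the
  unit disk, i.e. the closed arc cut off by the chord L(x,y) on the side opposite to
  the inverse point x* (which lies on the complementary arc).\<close>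
definition hyp_seg :: "complex \<Rightarrow> real \<Rightarrow> complex \<Rightarrow> complex \<Rightarrow> complex set" where
  "hyp_seg a r x y = {w \<in> sphere a r.
      cross (y - x) (w - x) * cross (y - x) (inv_pt x - x) \<le> 0}"

definition is_hyp_midpoint :: "complex \<Rightarrow> real \<Rightarrow> complex \<Rightarrow> complex \<Rightarrow> complex \<Rightarrow> bool" where
  "is_hyp_midpoint a r x y z \<longleftrightarrow> z \<in> hyp_seg a r x y \<and> hdist x z = hdist z y"

end

theory Submission
  imports Defs
begin

lemma cross_eq: "cross p q = Re p * Im q - Im p * Re q"
  by (simp add: cross_def)

lemma sph_eq: "p \<in> sphere a r \<longleftrightarrow> r \<ge> 0 \<and> (Re p - Re a)^2 + (Im p - Im a)^2 = r^2"
proof -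
  have "dist a p = sqrt ((Re p - Re a)^2 + (Im p - Im a)^2)"
    by (simp add: dist_norm cmod_def power2_commute)
  then show ?thesis
    by (auto simp: real_sqrt_unique)
qed

lemma sph_D: "p \<in> sphere a r \<Longrightarrow> (Re p - Re a)^2 + (Im p - Im a)^2 = r^2"
  by (drule sph_eq[THEN iffD1]) (erule conjunct2)
lemma sph_r: "p \<in> sphere a r \<Longrightarrow> r \<ge> 0"
  by (metis mem_sphere zero_le_dist)

lemma inv_Re: "Re (inv_pt p) = Re p / ((Re p)^2 + (Im p)^2)"
  by (simp add: inv_pt_def cmod_power2)
lemma inv_Im: "Im (inv_pt p) = Im p / ((Re p)^2 + (Im p)^2)"
  by (simp add: inv_pt_def cmod_power2 Im_divide_of_real)

lemma aff_cross: "m \<in> affine hull {p,q} \<Longrightarrow> cross (q - p) (m - p) = 0"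
proof -
  assume "m \<in> affine hull {p,q}"
  then obtain u v where "u + v = 1" "m = u *\<^sub>R p + v *\<^sub>R q" by (auto simp: affine_hull_2)
  then have "m = p + v *\<^sub>R (q - p)" by (simp add: algebra_simps) (metis add_diff_cancel_right' scaleR_left_distrib scaleR_one)
  then have e: "m - p = of_real v * (q - p)" by (simp add: scaleR_conv_of_real)
  have "cross (q-p) (m-p) = cross (q-p) (of_real v * (q - p))" by (simp only: e)
  also have "\<dots> = 0" by (simp add: cross_eq algebra_simps)
  finally show ?thesis .
qed

lemma aff0: "z \<in> affine hull {0,c} \<longleftrightarrow> (\<exists>t. z = of_real t * c)"
  apply (auto simp: affine_hull_2 scaleR_conv_of_real)
  subgoal for t by (rule exI[of _ "1-t"], rule exI[of _ t]) simp
  done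

lemma col0: assumes "cross b d = 0" shows "collinear {0,b,d}"
proof (cases "b = 0")
  case True then show ?thesis by (simp add: collinear_2 insert_commute)
next
  case False
  hence n: "(Re b)^2 + (Im b)^2 \<noteq> 0"
    by (metis complex_eq_iff zero_complex.sel sum_power2_eq_zero_iff)
  define t where "t = (Re b * Re d + Im b * Im d) / ((Re b)^2 + (Im b)^2)"
  have "d = t *\<^sub>R b" using assms n
    by (simp add: complex_eq_iff t_def cross_eq field_simps power2_eq_square)
  then show ?thesis by (auto simp: collinear_lemma)
qed

lemma inv_sq:
  fixes x1 x2 a1 a2 u :: real
  assumes "u = x1^2 + x2^2" "u \<noteq> 0"
  shows "(x1/u - a1)^2 + (x2/u - a2)^2 = 1/u - 2*(a1*x1+a2*x2)/u + (a1^2+a2^2)"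
proof -
  have "(x1/u - a1)^2 + (x2/u - a2)^2 = (x1^2+x2^2)/u^2 - 2*(a1*x1+a2*x2)/u + (a1^2+a2^2)"
    using assms(2) by (simp add: power2_eq_square field_simps)
  also have "(x1^2+x2^2)/u^2 = 1/u" using assms by (simp add: power2_eq_square)
  finally show ?thesis .
qed

lemma orth_a:
  assumes "x \<in> sphere a r" "inv_pt x \<in> sphere a r" "x \<noteq> 0" "cmod x \<noteq> 1"
  shows "(Re a)^2 + (Im a)^2 = r^2 + 1"
proof -
  define u where "u = (Re x)^2 + (Im x)^2"
  have u0: "u > 0" using assms(3) by (simp add: u_def complex_eq_iff sum_power2_gt_zero_iff)
  have u1: "u \<noteq> 1" using assms(4) by (simp add: u_def cmod_def)
  have e1: "(Re x - Re a)^2 + (Im x - Im a)^2 = r^2" using sph_D[OF assms(1)] .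
  have e2: "(Re x / u - Re a)^2 + (Im x / u - Im a)^2 = r^2" using sph_D[OF assms(2)] by (simp add: inv_Re inv_Im u_def)
  have e2': "1/u - 2*(Re a*Re x + Im a * Im x)/u + ((Re a)^2 + (Im a)^2) = r^2"
    using e2 inv_sq[OF u_def] u0 by simp
  have e2'': "1 - 2*(Re a*Re x + Im a * Im x) + u * ((Re a)^2 + (Im a)^2) = u * r^2"
  proof -
    have "1/u - 2*(Re a*Re x + Im a * Im x)/u + ((Re a)^2 + (Im a)^2)
       = (1 - 2*(Re a*Re x + Im a * Im x) + u * ((Re a)^2 + (Im a)^2)) / u"
      using u0 by (simp add: field_simps)
    with e2' have "(1 - 2*(Re a*Re x + Im a * Im x) + u * ((Re a)^2 + (Im a)^2)) / u = r^2" by simp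
    then show ?thesis using u0 by (simp add: divide_eq_eq mult.commute)
  qed
  have "(u - 1) * ((Re a)^2 + (Im a)^2 - r^2 - 1) = 0"
    using e1 e2'' unfolding u_def by (simp add: algebra_simps power2_eq_square)
  then show ?thesis using u1 by simp
qed

lemma on_circ:
  assumes "(Re a)^2+(Im a)^2 = r^2+1" "p \<in> sphere a r"
  shows "(Re p)^2+(Im p)^2 + 1 = 2*(Re a*Re p + Im a*Im p)"
  using sph_D[OF assms(2)] assms(1) by (simp add: power2_eq_square algebra_simps)

lemma nsq_pos: "p \<noteq> 0 \<Longrightarrow> (Re p)^2+(Im p)^2 > 0"
  by (simp add: complex_eq_iff sum_power2_gt_zero_iff)

lemma inv_on:
  assumes A: "(Re a)^2+(Im a)^2 = r^2+1" and p: "p \<in> sphere a r" "p \<noteq> 0"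
  shows "inv_pt p \<in> sphere a r"
proof -
  define u where "u = (Re p)^2 + (Im p)^2"
  have u0: "u > 0" using nsq_pos[OF p(2)] by (simp add: u_def)
  have F: "u + 1 = 2*(Re a*Re p + Im a*Im p)" using on_circ[OF A p(1)] by (simp add: u_def)
  have "(Re p / u - Re a)^2 + (Im p / u - Im a)^2 = 1/u - 2*(Re a*Re p+Im a*Im p)/u + ((Re a)^2+(Im a)^2)"
    using inv_sq[OF u_def] u0 by simp
  also have "\<dots> = 1/u - (u+1)/u + r^2 + 1" using F A by simp
  also have "\<dots> = r^2" using u0 by (simp add: field_simps)
  finally show ?thesis using sph_r[OF p(1)] by (intro iffD2[OF sph_eq]) (simp add: inv_Re inv_Im u_def)
qed

lemma cmod_inv: "cmod (inv_pt p) = 1 / cmod p"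
proof -
  have "cmod (inv_pt p) = cmod p / (cmod p)^2" by (simp add: inv_pt_def norm_divide norm_power)
  then show ?thesis by (cases "cmod p = 0") (simp_all add: power2_eq_square)
qed

lemma nsq_inv: "p \<noteq> 0 \<Longrightarrow> (Re (inv_pt p))^2 + (Im (inv_pt p))^2 = 1 / ((Re p)^2 + (Im p)^2)"
proof -
  assume p: "p \<noteq> 0"
  have "(Re (inv_pt p))^2 + (Im (inv_pt p))^2 = (cmod (inv_pt p))^2" by (simp add: cmod_power2)
  also have "\<dots> = 1 / (cmod p)^2" by (simp add: cmod_inv power_divide)
  finally show ?thesis by (simp add: cmod_power2)
qed

lemma inv_inv: "p \<noteq> 0 \<Longrightarrow> inv_pt (inv_pt p) = p"
  using nsq_pos[of p] by (simp add: complex_eq_iff inv_Re[of "inv_pt p"] inv_Im[of "inv_pt p"] nsq_inv) (simp add: inv_Re inv_Im)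

lemma inv_unit: "cmod p = 1 \<Longrightarrow> inv_pt p = p"
  by (simp add: inv_pt_def)

lemma hom_line_real:
  fixes a1 a2 p1 p2 q1 q2 b1 b2 u w :: real
  assumes "u = p1^2+p2^2" "w = q1^2+q2^2" "u \<noteq> 0" "w \<noteq> 0"
    "u + 1 = 2*(a1*p1+a2*p2)" "w + 1 = 2*(a1*q1+a2*q2)"
    "(q1-p1)*(b2-p2) - (q2-p2)*(b1-p1) = 0"
  shows "(2*(a1*b1+a2*b2) - 1)*((p1/u)*(q2/w) - (p2/u)*(q1/w)) + ((q1/w - p1/u)*b2 - (q2/w - p2/u)*b1) = 0"
proof -
  have star: "(2*(a1*b1+a2*b2)-1)*(p1*q2-p2*q1) + u*(q1*b2-q2*b1) + w*(b1*p2 - b2*p1) = 0"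
    using assms(5,6,7) by algebra
  have "(2*(a1*b1+a2*b2) - 1)*((p1/u)*(q2/w) - (p2/u)*(q1/w)) + ((q1/w - p1/u)*b2 - (q2/w - p2/u)*b1)
     = ((2*(a1*b1+a2*b2)-1)*(p1*q2-p2*q1) + u*(q1*b2-q2*b1) + w*(b1*p2 - b2*p1)) / (u*w)"
    using assms(3,4) by (simp add: field_simps)
  then show ?thesis using star by simp
qed

lemma H_core:
  fixes ea eb fa fb ka kb L ba bb da db :: real
  assumes "L*ka + (ea*bb - eb*ba) = 0" "L*kb + (fa*bb - fb*ba) = 0"
    "ka + (ea*db - eb*da) = 0" "kb + (fa*db - fb*da) = 0" "ea*fb - eb*fa \<noteq> 0"
  shows "ba*db - bb*da = 0"
proof -
  have v1: "(ea*fb - eb*fa) * (ba - L*da) = 0" using assms(1-4) by algebra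
  have v2: "(ea*fb - eb*fa) * (bb - L*db) = 0" using assms(1-4) by algebra
  have "ba = L*da" "bb = L*db" using v1 v2 assms(5) by auto
  then show ?thesis by (simp add: algebra_simps)
qed

lemma par_core:
  fixes ea eb fa fb wa wb :: real
  assumes "fa*wb - fb*wa = 0" "ea*fb - eb*fa = 0" "fa \<noteq> 0 \<or> fb \<noteq> 0"
  shows "ea*wb - eb*wa = 0"
proof -
  have "(ea*wb - eb*wa) * fa = 0" "(ea*wb - eb*wa) * fb = 0" using assms(1,2) by algebra+
  then show ?thesis using assms(3) by auto
qed

lemma hom_line:
  assumes A: "(Re a)^2+(Im a)^2 = r^2+1" and p: "p \<in> sphere a r" "p \<noteq> 0"
    and q: "q \<in> sphere a r" "q \<noteq> 0" and b: "b \<in> affine hull {p,q}"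
  shows "(2*(Re a*Re b + Im a*Im b) - 1) * cross (inv_pt p) (inv_pt q) + cross (inv_pt q - inv_pt p) b = 0"
proof -
  define u where "u = (Re p)^2 + (Im p)^2"
  define w where "w = (Re q)^2 + (Im q)^2"
  have "(2*(Re a*Re b+Im a*Im b) - 1)*((Re p/u)*(Im q/w) - (Im p/u)*(Re q/w)) + ((Re q/w - Re p/u)*Im b - (Im q/w - Im p/u)*Re b) = 0"
    apply (rule hom_line_real[OF u_def w_def])
    using nsq_pos[OF p(2)] nsq_pos[OF q(2)] on_circ[OF A p(1)] on_circ[OF A q(1)] aff_cross[OF b]
    by (auto simp: u_def w_def cross_eq)
  then show ?thesis by (simp add: cross_eq inv_Re inv_Im u_def w_def)
qed

lemma H:
  assumes A: "(Re a)^2+(Im a)^2 = r^2+1"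
    and p: "p \<in> sphere a r" "p \<noteq> 0" and q: "q \<in> sphere a r" "q \<noteq> 0"
    and m: "m \<in> sphere a r" "m \<noteq> 0" and n: "n \<in> sphere a r" "n \<noteq> 0"
    and b1: "b \<in> affine hull {p,q}" and b2: "b \<in> affine hull {m,n}"
    and d1: "d \<in> affine hull {inv_pt p, inv_pt q}" and d2: "d \<in> affine hull {inv_pt m, inv_pt n}"
    and mn: "inv_pt m \<noteq> inv_pt n"
    and nc: "cross (inv_pt q - inv_pt p) (inv_pt m - inv_pt p) \<noteq> 0"
  shows "cross b d = 0"
proof -
  define P Q M N where "P = inv_pt p" "Q = inv_pt q" "M = inv_pt m" "N = inv_pt n"
  define L where "L = 2*(Re a*Re b + Im a*Im b) - 1"
  have h1: "L * cross P Q + cross (Q - P) b = 0" using hom_line[OF A p q b1] by (simp add: L_def P_Q_M_N_def)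
  have h2: "L * cross M N + cross (N - M) b = 0" using hom_line[OF A m n b2] by (simp add: L_def P_Q_M_N_def)
  have h3: "cross (Q - P) (d - P) = 0" using aff_cross[OF d1] by (simp add: P_Q_M_N_def)
  have h4: "cross (N - M) (d - M) = 0" using aff_cross[OF d2] by (simp add: P_Q_M_N_def)
  show ?thesis
  proof (cases "cross (Q - P) (N - M) = 0")
    case False
    have "Re b * Im d - Im b * Re d = 0"
      apply (rule H_core[where L=L and ka="cross P Q" and ea="Re Q - Re P" and eb="Im Q - Im P" and kb="cross M N" and fa="Re N - Re M" and fb="Im N - Im M"])
      using h1 h2 h3 h4 False by (simp_all add: cross_eq algebra_simps)
    then show ?thesis by (simp add: cross_eq)
  next
    case True
    have f: "Re N - Re M \<noteq> 0 \<or> Im N - Im M \<noteq> 0" using mn by (auto simp: P_Q_M_N_def complex_eq_iff)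
    have "cross (Q - P) (d - M) = 0"
      using par_core[where ea="Re Q - Re P" and eb="Im Q - Im P" and fa="Re N - Re M" and fb="Im N - Im M" and wa="Re d - Re M" and wb="Im d - Im M"] h4 True f
      by (simp add: cross_eq algebra_simps)
    then have "cross (Q - P) (M - P) = 0" using h3 by (simp add: cross_eq algebra_simps)
    then show ?thesis using nc by (simp add: P_Q_M_N_def)
  qed
qed

lemma noncol3:
  assumes "p \<in> sphere a r" "q \<in> sphere a r" "m \<in> sphere a r" "p \<noteq> q" "m \<noteq> p" "m \<noteq> q"
  shows "cross (q - p) (m - p) \<noteq> 0"
proof
  assume c: "cross (q - p) (m - p) = 0"
  define N where "N = (Re q - Re p)^2 + (Im q - Im p)^2"
  have N0: "N \<noteq> 0" using assms(4) by (auto simp: N_def complex_eq_iff)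
  define t where "t = ((Re q - Re p)*(Re m - Re p) + (Im q - Im p)*(Im m - Im p)) / N"
  have tN: "t * N = (Re q - Re p)*(Re m - Re p) + (Im q - Im p)*(Im m - Im p)" using N0 by (simp add: t_def)
  have c': "(Re q - Re p)*(Im m - Im p) - (Im q - Im p)*(Re m - Re p) = 0" using c by (simp add: cross_eq)
  have "N * (Re m - Re p) = N * (t*(Re q - Re p))" unfolding mult.assoc[symmetric] mult.commute[of N t] tN
    using c' unfolding N_def by algebra
  then have m1: "Re m = Re p + t*(Re q - Re p)" using N0 by simp
  have "N * (Im m - Im p) = N * (t*(Im q - Im p))" unfolding mult.assoc[symmetric] mult.commute[of N t] tN
    using c' unfolding N_def by algebra
  then have m2: "Im m = Im p + t*(Im q - Im p)" using N0 by simp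
  have ep: "(Re p - Re a)^2 + (Im p - Im a)^2 = r^2" using sph_D[OF assms(1)] .
  have eq: "(Re q - Re a)^2 + (Im q - Im a)^2 = r^2" using sph_D[OF assms(2)] .
  have em: "(Re m - Re a)^2 + (Im m - Im a)^2 = r^2" using sph_D[OF assms(3)] .
  have "t*(t-1)*N = 0" using ep eq em unfolding m1 m2 N_def by algebra
  then have "t = 0 \<or> t = 1" using N0 by auto
  then show False using assms(5,6) m1 m2 by (auto simp: complex_eq_iff)
qed

lemma dist_forms:
  assumes p: "p \<noteq> 0" and cp: "(Re p)^2+(Im p)^2 = 2*(Re c*Re p + Im c*Im p)"
    and z: "z = of_real t * c" and tz: "t^2 * ((Re c)^2+(Im c)^2) = t - 1"
  shows "(cmod (p - z))^2 = (1 - ((Re p)^2+(Im p)^2)) * (t - 1)"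
    and "(cmod (inv_pt p - z))^2 = 1/((Re p)^2+(Im p)^2) - 1"
proof -
  define u where "u = (Re p)^2+(Im p)^2"
  have u0: "u > 0" using nsq_pos[OF p] by (simp add: u_def)
  have "(cmod (p - z))^2 = u - 2*t*(Re c*Re p + Im c*Im p) + t^2 * ((Re c)^2+(Im c)^2)"
    by (simp add: z cmod_power2) (simp add: u_def power2_eq_square algebra_simps)
  also have "\<dots> = (1 - u) * (t - 1)" using cp tz by (simp add: u_def algebra_simps)
  finally show "(cmod (p - z))^2 = (1 - ((Re p)^2+(Im p)^2)) * (t - 1)" by (simp add: u_def)
  have "(cmod (inv_pt p - z))^2 = (Re p/u - t * Re c)^2 + (Im p/u - t * Im c)^2"
    by (simp add: z cmod_power2 inv_Re inv_Im u_def)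
  also have "\<dots> = 1/u - 2*((t*Re c)*Re p + (t*Im c)*Im p)/u + ((t*Re c)^2+(t*Im c)^2)"
    by (rule inv_sq[OF u_def]) (use u0 in simp)
  also have "\<dots> = 1/u - t * (2*(Re c*Re p + Im c*Im p))/u + t^2*((Re c)^2+(Im c)^2)"
    by (simp add: algebra_simps power2_eq_square)
  also have "\<dots> = 1/u - 1" using cp tz u0 by (simp add: u_def[symmetric])
  finally show "(cmod (inv_pt p - z))^2 = 1/((Re p)^2+(Im p)^2) - 1" by (simp add: u_def)
qed

lemma tbound:
  fixes u w C t :: real
  assumes "0<u" "u<1" "0<w" "w<1" "C*(4*(1-u*w)) = u+w-2*u*w" "t^2*C - t + 1 = 0" "t < 2"
  shows "t*(2-u-w) \<le> 2*(1-u*w)"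
proof (rule ccontr)
  assume neg: "\<not> ?thesis"
  define q m e sv where "q = 2-u-w" "m = 1-u*w" "e = (1-u)*(1-w)" "sv = t*q"
  have uw: "u*w < 1*1" using assms(1-4) by (intro mult_strict_mono) auto
  have q0: "q > 0" and m0: "m > 0" and e0: "e > 0" using assms(1-4) uw by (auto simp: q_m_e_sv_def)
  have me': "m - e = u*(1-w) + w*(1-u)" by (simp add: q_m_e_sv_def algebra_simps)
  have "u*(1-w) > 0" "w*(1-u) > 0" using assms(1-4) by simp_all
  then have me: "m - e > 0" using me' by linarith
  have qme: "q = m + e" by (simp add: q_m_e_sv_def algebra_simps)
  have C4: "4*C*m = m - e" using assms(5) by (simp add: q_m_e_sv_def algebra_simps)
  have Cd: "4*C = (m - e)/m" using C4 m0 by (simp add: field_simps)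
  have C0: "C > 0" using Cd me m0 by (smt (verit) divide_pos_pos)
  have Cq: "4*C < 1" using Cd m0 e0 by (simp add: divide_less_eq)
  have sS: "sv > 2*m" using neg by (simp add: q_m_e_sv_def)
  have s2: "sv < 2*q" using assms(7) q0 unfolding q_m_e_sv_def(4) by (simp add: mult_strict_right_mono)
  have "C*(2*m)^2 - (2*m)*q + q^2 = (4*C*m)*m - 2*m*q + q^2" by (simp add: power2_eq_square algebra_simps)
  also have "\<dots> = (m-e)*m - 2*m*(m+e) + (m+e)^2" using C4 qme by simp
  also have "\<dots> = -e*(m-e)" by (simp add: power2_eq_square algebra_simps)
  finally have fT: "C*(2*m)^2 - (2*m)*q + q^2 = - e*(m - e)" .
  have ft: "C * sv^2 - sv*q + q^2 = 0"
  proof -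
    have "C * sv^2 - sv*q + q^2 = q^2 * (t^2*C - t + 1)" by (simp add: q_m_e_sv_def power2_eq_square algebra_simps)
    then show ?thesis using assms(6) by simp
  qed
  have diff: "(C * sv^2 - sv*q + q^2) - (C*(2*m)^2 - (2*m)*q + q^2) = (sv - 2*m)*(C*(sv + 2*m) - q)"
    by (simp add: power2_eq_square algebra_simps)
  have "C*(sv + 2*m) < C*(4*q)" using C0 sS s2 by simp
  also have "\<dots> < q" using Cq q0 by simp
  finally have "(sv - 2*m)*(C*(sv + 2*m) - q) < 0" using sS by (simp add: mult_pos_neg)
  moreover have "- e*(m - e) < 0" using e0 me by simp
  ultimately show False using diff ft fT by linarith
qed

lemma ratio_form:
  assumes p: "p \<noteq> 0" "(Re p)^2+(Im p)^2 < 1" and cp: "(Re p)^2+(Im p)^2 = 2*(Re c*Re p + Im c*Im p)"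
    and z: "z = of_real t * c" and tz: "t^2 * ((Re c)^2+(Im c)^2) = t - 1"
    and z': "z' = of_real s * c" and sz: "s^2 * ((Re c)^2+(Im c)^2) = s - 1"
  shows "abs_ratio z p (inv_pt p) z' = sqrt (s - 1) / sqrt (t - 1)"
proof -
  define u where "u = (Re p)^2+(Im p)^2"
  have u0: "u > 0" using nsq_pos[OF p(1)] by (simp add: u_def)
  have u1: "u < 1" using p(2) by (simp add: u_def)
  have d1: "(cmod (p - z))^2 = (1 - u) * (t - 1)" using dist_forms(1)[OF p(1) cp z tz] by (simp add: u_def)
  have d2: "(cmod (inv_pt p - z))^2 = 1/u - 1" using dist_forms(2)[OF p(1) cp z tz] by (simp add: u_def)
  have d3: "(cmod (p - z'))^2 = (1 - u) * (s - 1)" using dist_forms(1)[OF p(1) cp z' sz] by (simp add: u_def)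
  have d4: "(cmod (inv_pt p - z'))^2 = 1/u - 1" using dist_forms(2)[OF p(1) cp z' sz] by (simp add: u_def)
  have e1: "cmod (z - p) = sqrt (1-u) * sqrt (t-1)"
    using d1 by (metis norm_minus_commute norm_ge_zero real_sqrt_abs real_sqrt_mult abs_of_nonneg real_sqrt_power)
  have e3: "cmod (p - z') = sqrt (1-u) * sqrt (s-1)"
    using d3 by (metis norm_ge_zero real_sqrt_abs real_sqrt_mult abs_of_nonneg real_sqrt_power)
  have e2: "cmod (z - inv_pt p) = sqrt (1/u - 1)"
    using d2 by (metis norm_minus_commute norm_ge_zero real_sqrt_abs abs_of_nonneg real_sqrt_power)
  have e4: "cmod (inv_pt p - z') = sqrt (1/u - 1)"
    using d4 by (metis norm_ge_zero real_sqrt_abs abs_of_nonneg real_sqrt_power)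
  have n2: "sqrt (1/u - 1) > 0" using u0 u1 by simp
  have n1: "sqrt (1 - u) > 0" using u1 by simp
  show ?thesis unfolding abs_ratio_def e1 e2 e3 e4 using n1 n2 by (simp add: field_simps)
qed

lemma part1:
  assumes A: "(Re a)^2+(Im a)^2 = ra^2+1"
    and xa: "x \<in> sphere a ra" and ya: "y \<in> sphere a ra" and x0: "x \<noteq> 0" and y0: "y \<noteq> 0"
    and x1: "cmod x < 1" and y1: "cmod y < 1"
    and semi: "inv_pt x + inv_pt y = 2 * a"
    and c0: "0 \<in> sphere c rc" and cx: "x \<in> sphere c rc" and cy: "y \<in> sphere c rc"
  shows "(\<exists>z. z \<in> affine hull {0, c} \<inter> sphere a ra \<and> z \<in> ball 0 1) \<and>
        (\<exists>z'. z' \<in> affine hull {0, c} \<inter> sphere a ra \<and> z' \<notin> ball 0 1) \<and>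
        (\<forall>z z'. z \<in> affine hull {0, c} \<inter> sphere a ra \<and> z \<in> ball 0 1 \<and>
                z' \<in> affine hull {0, c} \<inter> sphere a ra \<and> z' \<notin> ball 0 1 \<longrightarrow>
             is_hyp_midpoint a ra x y z \<and>
             abs_ratio z x (inv_pt x) z' = abs_ratio z y (inv_pt y) z') \<and>
        (cmod (a - c))\<^sup>2 = ra\<^sup>2 + rc\<^sup>2"
proof -
  define u where "u = (Re x)^2+(Im x)^2"
  define w where "w = (Re y)^2+(Im y)^2"
  define C where "C = (Re c)^2+(Im c)^2"
  define p where "p = Re x * Re y + Im x * Im y"
  have u0: "u > 0" using nsq_pos[OF x0] by (simp add: u_def)
  have w0: "w > 0" using nsq_pos[OF y0] by (simp add: w_def)
  have u1: "u < 1" using x1 by (simp add: u_def cmod_def)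
  have w1: "w < 1" using y1 by (simp add: w_def cmod_def)
  have Fx: "u + 1 = 2*(Re a*Re x + Im a*Im x)" using on_circ[OF A xa] by (simp add: u_def)
  have Fy: "w + 1 = 2*(Re a*Re y + Im a*Im y)" using on_circ[OF A ya] by (simp add: w_def)
  have rc: "C = rc^2" using sph_D[OF c0] by (simp add: C_def)
  have Cx: "u = 2*(Re c*Re x + Im c*Im x)" using sph_D[OF cx] rc
    by (simp add: u_def C_def power2_eq_square algebra_simps)
  have Cy: "w = 2*(Re c*Re y + Im c*Im y)" using sph_D[OF cy] rc
    by (simp add: w_def C_def power2_eq_square algebra_simps)
  have s1: "Re x / u + Re y / w = 2 * Re a" and s2: "Im x / u + Im y / w = 2 * Im a"
    using semi by (simp_all add: complex_eq_iff inv_Re inv_Im u_def w_def)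
  have "u + 1 = (Re x / u + Re y / w) * Re x + (Im x / u + Im y / w) * Im x"
    using Fx s1 s2 by (simp add: algebra_simps)
  also have "\<dots> = ((Re x)^2 + (Im x)^2)/u + p / w" using u0 w0 by (simp add: field_simps p_def power2_eq_square)
  also have "\<dots> = 1 + p / w" using u0 by (simp add: u_def[symmetric])
  finally have pxy: "p = u * w" using w0 by (simp add: field_simps)
  have "2*(Re a*Re c + Im a*Im c) = (Re x / u + Re y / w) * Re c + (Im x / u + Im y / w) * Im c"
    using s1 s2 by (simp add: algebra_simps)
  also have "\<dots> = (Re c*Re x + Im c*Im x)/u + (Re c*Re y + Im c*Im y)/w"
    by (simp add: add_divide_distrib algebra_simps)
  also have "\<dots> = 1"
  proof -
    have e: "Re c*Re x + Im c*Im x = u/2" "Re c*Re y + Im c*Im y = w/2" using Cx Cy by simp_all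
    show ?thesis unfolding e using u0 w0 by simp
  qed
  finally have ac: "2*(Re a*Re c + Im a*Im c) = 1" .
  have gram: "C*(u*w - p^2) = (Re c*Re x + Im c*Im x)^2 * w - 2*(Re c*Re x + Im c*Im x)*(Re c*Re y + Im c*Im y)*p + (Re c*Re y + Im c*Im y)^2 * u"
    unfolding C_def u_def w_def p_def by algebra
  have h: "C*(u*w*(1 - u*w)) = u*w*(u + w - 2*u*w)/4"
  proof -
    have "C*(u*w*(1 - u*w)) = C*(u*w - p^2)" using pxy by (simp add: power2_eq_square algebra_simps)
    also have "\<dots> = (u/2)^2 * w - 2*(u/2)*(w/2)*p + (w/2)^2 * u"
    proof -
      have e: "Re c*Re x + Im c*Im x = u/2" "Re c*Re y + Im c*Im y = w/2" using Cx Cy by simp_all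
      show ?thesis unfolding gram e by simp
    qed
    also have "\<dots> = u*w*(u + w - 2*u*w)/4" using pxy by (simp add: power2_eq_square algebra_simps)
    finally show ?thesis .
  qed
  have "(u*w) * (C*(4*(1-u*w))) = 4 * (C*(u*w*(1 - u*w)))" by (simp add: algebra_simps)
  also have "\<dots> = (u*w)*(u+w-2*u*w)" unfolding h by simp
  finally have Cform: "C*(4*(1-u*w)) = u+w-2*u*w" using u0 w0 by simp
  have ex: "Re c*Re x + Im c*Im x = u/2" and ey: "Re c*Re y + Im c*Im y = w/2" using Cx Cy by simp_all
  have C0: "C > 0"
  proof -
    have "C \<ge> 0" by (simp add: C_def)
    moreover have "C \<noteq> 0"
    proof
      assume "C = 0"
      then have "Re c = 0" "Im c = 0" by (simp_all add: C_def)
      then show False using Cx u0 by simp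
    qed
    ultimately show ?thesis by simp
  qed
  have uw1: "u*w < 1*1" using u0 w0 u1 w1 by (intro mult_strict_mono) auto
  have uwp: "u*w > 0" using u0 w0 by simp
  have e1: "(1-u)*(1-w) > 0" using u1 w1 by simp
  have Cq: "4*C < 1"
  proof -
    have "(4*C)*(1-u*w) < 1*(1-u*w)" using Cform e1 by (simp add: algebra_simps)
    then show ?thesis by (rule mult_right_less_imp_less) (use uw1 in simp)
  qed
  have rge: "ra \<ge> 0" using sph_r[OF xa] .
  have nsq_tc: "\<And>t. (cmod (of_real t * c))^2 = t^2 * C"
    by (simp add: cmod_power2) (simp add: C_def power2_eq_square algebra_simps)
  have onS: "of_real t * c \<in> sphere a ra" if "t^2*C - t + 1 = 0" for t
  proof -
    have "(Re (of_real t * c) - Re a)^2 + (Im (of_real t * c) - Im a)^2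
        = t^2 * C - t * (2*(Re a*Re c + Im a*Im c)) + ((Re a)^2+(Im a)^2)"
      by (simp add: C_def power2_eq_square algebra_simps)
    also have "\<dots> = ra^2" using that ac A by simp
    finally show ?thesis using rge by (intro iffD2[OF sph_eq]) simp
  qed
  have zpt: "\<exists>t. z = of_real t * c \<and> t^2*C = t - 1 \<and> (cmod z)^2 = t - 1"
    if zh: "z \<in> affine hull {0,c}" "z \<in> sphere a ra" for z
  proof -
    obtain t where z: "z = of_real t * c" using aff0[THEN iffD1, OF zh(1)] by blast
    have "(Re z)^2 + (Im z)^2 + 1 = 2*(Re a*Re z + Im a*Im z)" using on_circ[OF A zh(2)] .
    also have "2*(Re a*Re z + Im a*Im z) = t * (2*(Re a*Re c + Im a*Im c))" by (simp add: z algebra_simps)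
    finally have "(cmod z)^2 + 1 = t" using ac by (simp add: cmod_power2)
    moreover have "(cmod z)^2 = t^2*C" using nsq_tc z by simp
    ultimately show ?thesis using z by auto
  qed
  have orth: "(cmod (a - c))\<^sup>2 = ra\<^sup>2 + rc\<^sup>2"
  proof -
    have "(cmod (a - c))\<^sup>2 = ((Re a)^2+(Im a)^2) - 2*(Re a*Re c + Im a*Im c) + C"
      by (simp add: cmod_power2) (simp add: C_def power2_eq_square algebra_simps)
    then show ?thesis using A ac rc by simp
  qed
  define Dd where "Dd = 1 - 4*C"
  define sq where "sq = sqrt Dd"
  have sq0: "sq > 0" using Cq by (simp add: sq_def Dd_def)
  have sq1: "sq < 1" using C0 by (simp add: sq_def Dd_def)
  have sqs: "sq^2 = 1 - 4*C" using Cq by (simp add: sq_def Dd_def)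
  have Csq: "C = (1 - sq^2)/4" using sqs by simp
  define t0 where "t0 = 2/(1+sq)"
  define s0 where "s0 = 2/(1-sq)"
  have k1: "1 + sq \<noteq> 0" and k2: "1 - sq \<noteq> 0" using sq0 sq1 by simp_all
  have rt0: "t0^2*C - t0 + 1 = 0"
  proof -
    have "t0^2*C = (1-sq^2)/(1+sq)^2" unfolding t0_def Csq using k1 by (simp add: power_divide field_simps)
    also have "(1-sq^2) = (1-sq)*(1+sq)" by (simp add: power2_eq_square algebra_simps)
    also have "(1-sq)*(1+sq)/(1+sq)^2 = (1-sq)/(1+sq)" using k1 by (simp add: power2_eq_square)
    finally have e: "t0^2*C = (1-sq)/(1+sq)" .
    have "t0^2*C - t0 + 1 = (1-sq)/(1+sq) - 2/(1+sq) + 1" unfolding e by (simp add: t0_def)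
    also have "\<dots> = ((1-sq) - 2)/(1+sq) + 1" by (simp only: diff_divide_distrib)
    also have "(1-sq) - 2 = -(1+sq)" by simp
    also have "-(1+sq)/(1+sq) + 1 = 0" using k1 by (simp add: field_simps)
    finally show ?thesis .
  qed
  have rs0: "s0^2*C - s0 + 1 = 0"
  proof -
    have "s0^2*C = (1-sq^2)/(1-sq)^2" unfolding s0_def Csq using k2 by (simp add: power_divide field_simps)
    also have "(1-sq^2) = (1+sq)*(1-sq)" by (simp add: power2_eq_square algebra_simps)
    also have "(1+sq)*(1-sq)/(1-sq)^2 = (1+sq)/(1-sq)" using k2 by (simp add: power2_eq_square)
    finally have e: "s0^2*C = (1+sq)/(1-sq)" .
    have "s0^2*C - s0 + 1 = (1+sq)/(1-sq) - 2/(1-sq) + 1" unfolding e by (simp add: s0_def)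
    also have "\<dots> = ((1+sq) - 2)/(1-sq) + 1" by (simp only: diff_divide_distrib)
    also have "(1+sq) - 2 = -(1-sq)" by simp
    also have "-(1-sq)/(1-sq) + 1 = 0" using k2 by (simp add: field_simps)
    finally show ?thesis .
  qed
  have t02: "t0 < 2" using sq0 by (simp add: t0_def divide_less_eq)
  have s02: "s0 \<ge> 2" using sq0 sq1 by (simp add: s0_def le_divide_eq)
  have ex1: "\<exists>z. z \<in> affine hull {0, c} \<inter> sphere a ra \<and> z \<in> ball 0 1"
  proof (intro exI conjI)
    have "of_real t0 * c \<in> affine hull {0, c}" by (subst aff0) blast
    then show "of_real t0 * c \<in> affine hull {0, c} \<inter> sphere a ra" using onS[OF rt0] by blast
    have "(cmod (of_real t0 * c))^2 < 1^2" using nsq_tc[of t0] rt0 t02 by simp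
    then have "cmod (of_real t0 * c) < 1" by (rule power_less_imp_less_base) simp
    then show "of_real t0 * c \<in> ball 0 1" by simp
  qed
  have ex2: "\<exists>z'. z' \<in> affine hull {0, c} \<inter> sphere a ra \<and> z' \<notin> ball 0 1"
  proof (intro exI conjI)
    have "of_real s0 * c \<in> affine hull {0, c}" by (subst aff0) blast
    then show "of_real s0 * c \<in> affine hull {0, c} \<inter> sphere a ra" using onS[OF rs0] by blast
    have "(cmod (of_real s0 * c))^2 \<ge> 1^2" using nsq_tc[of s0] rs0 s02 by simp
    then have "1 \<le> cmod (of_real s0 * c)" by (rule power2_le_imp_le) simp
    then show "of_real s0 * c \<notin> ball 0 1" by simp
  qed
  have main: "is_hyp_midpoint a ra x y z \<and> abs_ratio z x (inv_pt x) z' = abs_ratio z y (inv_pt y) z'"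
    if z: "z \<in> affine hull {0, c}" "z \<in> sphere a ra" "z \<in> ball 0 1"
    and z': "z' \<in> affine hull {0, c}" "z' \<in> sphere a ra" for z z'
  proof -
    obtain t where t: "z = of_real t * c" "t^2*C = t - 1" "(cmod z)^2 = t - 1" using zpt[OF z(1,2)] by blast
    obtain s where s: "z' = of_real s * c" "s^2*C = s - 1" "(cmod z')^2 = s - 1" using zpt[OF z'(1,2)] by blast
    have "cmod z < 1" using z(3) by simp
    then have "(cmod z)^2 < 1" by (simp add: power_less_one_iff)
    then have t2: "t < 2" using t(3) by simp
    have t1: "t \<ge> 1" using t(3) by (smt (verit) zero_le_power2)
    have xl: "(Re x)^2+(Im x)^2 < 1" and yl: "(Re y)^2+(Im y)^2 < 1" using u1 w1 by (simp_all add: u_def w_def)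
    have rx: "abs_ratio z x (inv_pt x) z' = sqrt (s - 1) / sqrt (t - 1)"
      by (rule ratio_form[OF x0 xl _ t(1) _ s(1)]) (use Cx t s in \<open>simp_all add: u_def C_def\<close>)
    have ry: "abs_ratio z y (inv_pt y) z' = sqrt (s - 1) / sqrt (t - 1)"
      by (rule ratio_form[OF y0 yl _ t(1) _ s(1)]) (use Cy t s in \<open>simp_all add: w_def C_def\<close>)
    have dx: "(cmod (x - z))^2 = (1 - u) * (t - 1)" using dist_forms(1)[OF x0 _ t(1)] Cx t(2) by (simp add: u_def C_def)
    have dy: "(cmod (y - z))^2 = (1 - w) * (t - 1)" using dist_forms(1)[OF y0 _ t(1)] Cy t(2) by (simp add: w_def C_def)
    have nx: "cmod (x - z) = sqrt (1-u) * sqrt (t-1)"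
      using dx by (metis norm_ge_zero real_sqrt_abs real_sqrt_mult abs_of_nonneg real_sqrt_power)
    have ny: "cmod (z - y) = sqrt (1-w) * sqrt (t-1)"
      using dy by (metis norm_minus_commute norm_ge_zero real_sqrt_abs real_sqrt_mult abs_of_nonneg real_sqrt_power)
    have cx2: "(cmod x)^2 = u" and cy2: "(cmod y)^2 = w" by (simp_all add: cmod_power2 u_def w_def)
    have su: "sqrt (1-u) > 0" and sw: "sqrt (1-w) > 0" using u1 w1 by simp_all
    have hd: "hdist x z = hdist z y"
      unfolding hdist_def nx ny cx2 cy2 t(3) using su sw by simp
    define D where "D = Re x * Im y - Im x * Re y"
    have c1: "cross (y - x) (z - x) = t * cross (y - x) c + D"
      by (simp add: t(1) cross_eq D_def algebra_simps)
    have c2: "cross (y - x) (inv_pt x - x) = -(1/u - 1) * D"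
    proof -
      have ix: "Re (inv_pt x) - Re x = (1/u - 1) * Re x" "Im (inv_pt x) - Im x = (1/u - 1) * Im x"
        by (simp_all add: inv_Re inv_Im u_def[symmetric] algebra_simps) (simp_all add: u_def add.commute)
      have "cross (y - x) (inv_pt x - x) = (Re y - Re x) * (Im (inv_pt x) - Im x) - (Im y - Im x) * (Re (inv_pt x) - Re x)"
        by (simp add: cross_eq)
      also have "\<dots> = (1/u - 1) * ((Re y - Re x) * Im x - (Im y - Im x) * Re x)"
        unfolding ix by (simp add: algebra_simps)
      finally have "cross (y - x) (inv_pt x - x) = (1/u - 1) * ((Re y - Re x) * Im x - (Im y - Im x) * Re x)" .
      then show ?thesis by (simp add: D_def algebra_simps)
    qed
    have Kid: "D * cross (y - x) c = (p - u) * (Re c*Re y + Im c*Im y) - (Re c*Re x + Im c*Im x) * (w - p)"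
      unfolding D_def p_def u_def w_def cross_eq minus_complex.sel by algebra
    have K: "D * cross (y - x) c = u*w*(u+w-2)/2"
      unfolding Kid ex ey pxy by (simp add: field_simps)
    have D2id: "D^2 = u*w - p^2" unfolding D_def p_def u_def w_def by algebra
    have D2: "D^2 = u*w*(1 - u*w)" unfolding D2id pxy by (simp add: power2_eq_square algebra_simps)
    have prod: "cross (y - x) (z - x) * cross (y - x) (inv_pt x - x)
        = -(1/u - 1) * (u*w/2) * (t*(u+w-2) + 2*(1-u*w))"
    proof -
      have "cross (y - x) (z - x) * cross (y - x) (inv_pt x - x) = -(1/u - 1) * (t * (D * cross (y - x) c) + D^2)"
        unfolding c1 c2 by (simp add: power2_eq_square algebra_simps)
      also have "t * (D * cross (y - x) c) + D^2 = (u*w/2) * (t*(u+w-2) + 2*(1-u*w))"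
        unfolding K D2 by (simp add: field_simps)
      also have "-(1/u - 1) * ((u*w/2) * (t*(u+w-2) + 2*(1-u*w))) = -(1/u - 1) * (u*w/2) * (t*(u+w-2) + 2*(1-u*w))"
        by (simp only: mult.assoc)
      finally show ?thesis .
    qed
    have tb: "t*(2-u-w) \<le> 2*(1-u*w)" by (rule tbound[OF u0 u1 w0 w1 Cform _ t2]) (use t(2) in simp)
    have "(1/u - 1) * (u*w/2) * (t*(u+w-2) + 2*(1-u*w)) \<ge> 0"
    proof (intro mult_nonneg_nonneg)
      show "1/u - 1 \<ge> 0" using u0 u1 by simp
      show "u*w/2 \<ge> 0" using uwp by simp
      show "t*(u+w-2) + 2*(1-u*w) \<ge> 0" using tb by (simp add: algebra_simps)
    qed
    then have seg: "cross (y - x) (z - x) * cross (y - x) (inv_pt x - x) \<le> 0" unfolding prod mult_minus_left by linarith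
    have "z \<in> hyp_seg a ra x y" unfolding hyp_seg_def using z(2) seg by simp
    then show ?thesis using hd rx ry by (simp add: is_hyp_midpoint_def)
  qed
  show ?thesis using ex1 ex2 main orth by blast
qed

theorem proposition4p29:
  fixes x y a c xs ys :: complex and ra rc :: real
  assumes xB: "x \<in> ball 0 1 - {0}" and yB: "y \<in> ball 0 1 - {0}"
    and ncol: "\<not> collinear {0, x, y}"
    and neq: "cmod x \<noteq> cmod y"
    and circ_a: "{x, y, inv_pt x, inv_pt y} \<subseteq> sphere a ra"
    and xs_on: "xs \<in> sphere 0 1 \<inter> sphere a ra"
    and ys_on: "ys \<in> sphere 0 1 \<inter> sphere a ra"
    and xs_ne_ys: "xs \<noteq> ys"
    and order_xs: "cross x xs * cross x y < 0"
    and order_ys: "cross y ys * cross y x < 0"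
    and circ_c: "{0, x, y} \<subseteq> sphere c rc"
  shows
    "(inv_pt x + inv_pt y = 2 * a \<longrightarrow>
        (\<exists>z. z \<in> affine hull {0, c} \<inter> sphere a ra \<and> z \<in> ball 0 1) \<and>
        (\<exists>z'. z' \<in> affine hull {0, c} \<inter> sphere a ra \<and> z' \<notin> ball 0 1) \<and>
        (\<forall>z z'. z \<in> affine hull {0, c} \<inter> sphere a ra \<and> z \<in> ball 0 1 \<and>
                z' \<in> affine hull {0, c} \<inter> sphere a ra \<and> z' \<notin> ball 0 1 \<longrightarrow>
             is_hyp_midpoint a ra x y z \<and>
             abs_ratio z x (inv_pt x) z' = abs_ratio z y (inv_pt y) z') \<and>
        (cmod (a - c))\<^sup>2 = ra\<^sup>2 + rc\<^sup>2)
     \<and> (\<forall>b d. b \<in> affine hull {xs, y} \<inter> affine hull {x, inv_pt y} \<and>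
              d \<in> affine hull {inv_pt x, y} \<inter> affine hull {xs, inv_pt y} \<longrightarrow>
              collinear {0, b, d})
     \<and> (\<forall>b' d'. b' \<in> affine hull {x, ys} \<inter> affine hull {inv_pt x, y} \<and>
              d' \<in> affine hull {x, inv_pt y} \<inter> affine hull {inv_pt x, ys} \<longrightarrow>
              collinear {0, b', d'})"
proof -
  have x0: "x \<noteq> 0" and x1: "cmod x < 1" using xB by auto
  have y0: "y \<noteq> 0" and y1: "cmod y < 1" using yB by auto
  have xa: "x \<in> sphere a ra" and ya: "y \<in> sphere a ra"
    and Xa: "inv_pt x \<in> sphere a ra" and Ya: "inv_pt y \<in> sphere a ra" using circ_a by auto
  have A: "(Re a)^2+(Im a)^2 = ra^2+1" using orth_a[OF xa Xa x0] x1 by simp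
  have c0: "0 \<in> sphere c rc" and cx: "x \<in> sphere c rc" and cy: "y \<in> sphere c rc" using circ_c by auto
  note P1 = part1[OF A xa ya x0 y0 x1 y1 _ c0 cx cy]
  have xsa: "xs \<in> sphere a ra" and xs1: "cmod xs = 1" using xs_on by auto
  have ysa: "ys \<in> sphere a ra" and ys1: "cmod ys = 1" using ys_on by auto
  have xs0: "xs \<noteq> 0" and ys0: "ys \<noteq> 0" using xs1 ys1 by auto
  have ixs: "inv_pt xs = xs" and iys: "inv_pt ys = ys" using inv_unit xs1 ys1 by auto
  have nX: "cmod (inv_pt x) > 1" using x0 x1 by (simp add: cmod_inv)
  have nY: "cmod (inv_pt y) > 1" using y0 y1 by (simp add: cmod_inv)
  have X0: "inv_pt x \<noteq> 0" and Y0: "inv_pt y \<noteq> 0" using nX nY by auto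
  have iix: "inv_pt (inv_pt x) = x" and iiy: "inv_pt (inv_pt y) = y" using inv_inv x0 y0 by auto
  have XY: "inv_pt x \<noteq> inv_pt y" using iix iiy neq by metis
  have Q1: "collinear {0, b, d}"
    if b: "b \<in> affine hull {xs, y}" "b \<in> affine hull {x, inv_pt y}"
    and d: "d \<in> affine hull {inv_pt x, y}" "d \<in> affine hull {xs, inv_pt y}" for b d
  proof -
    have nc: "cross (inv_pt y - inv_pt xs) (inv_pt x - inv_pt xs) \<noteq> 0"
      unfolding ixs
      by (rule noncol3[OF xsa Ya Xa]) (use xs1 nX nY XY in auto)
    have "cross b d = 0"
      by (rule H[OF A xsa xs0 ya y0 xa x0 Ya Y0 b]) (use d ixs iiy nX y1 nc in auto)
    then show ?thesis by (rule col0)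
  qed
  have Q2: "collinear {0, b', d'}"
    if b: "b' \<in> affine hull {x, ys}" "b' \<in> affine hull {inv_pt x, y}"
    and d: "d' \<in> affine hull {x, inv_pt y}" "d' \<in> affine hull {inv_pt x, ys}" for b' d'
  proof -
    have nc: "cross (inv_pt ys - inv_pt x) (inv_pt (inv_pt x) - inv_pt x) \<noteq> 0"
      unfolding iys iix
      by (rule noncol3[OF Xa ysa xa]) (use ys1 nX x1 in auto)
    have "cross b' d' = 0"
      by (rule H[OF A xa x0 ysa ys0 Xa X0 ya y0 b]) (use d iys iix nY x1 nc in auto)
    then show ?thesis by (rule col0)
  qed
  show ?thesis using P1 Q1 Q2 by blast
qed

end
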